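(* For every positive integer $n$, \[ e^n=\sum_{k=0}^{n-1}\frac{n^k}{k!}+\frac{n^{n-1}}{(n-1)!}\left(1+n+\mathop{\mathrm{K}}_{m=1}^{\infty}\left(\frac{-n(m+n-1)}{m+2n+1}\right)\right), \] where in particular the continued fraction converges.
   Context: For sequences $(a_m)_{m\ge1}$, $(b_m)_{m\ge1}$ of complex numbers, $\mathop{\mathrm{K}}_{m=1}^{\infty}\left(\frac{a_m}{b_m}\right)$ denotes the continued fraction $\cfrac{a_1}{b_1+\cfrac{a_2}{b_2+\cfrac{a_3}{b_3+\cdots}}}$, whose value is the limit as $k\to\infty$ of its $k$-th approximants $\cfrac{a_1}{b_1+\cfrac{a_2}{\ddots+\cfrac{a_k}{b_k}}}$ (the $0$-th approximant being $0$). Here $a_m=-n(m+n-1)$ and $b_m=m+2n+1$. *)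

theory Defs
  imports "HOL-Analysis.Analysis"
begin

text \<open>k-th approximant of the continued fraction K_{m=1}^\<infinity> (a m / b m):
  a 1 / (b 1 + a 2 / (... + a k / b k)); the 0-th approximant is 0.\<close>
definition cf_approx :: "(nat \<Rightarrow> 'a::field) \<Rightarrow> (nat \<Rightarrow> 'a) \<Rightarrow> nat \<Rightarrow> 'a" where
  "cf_approx a b k = foldr (\<lambda>m acc. a m / (b m + acc)) [1..<k+1] 0"

definition cf_converges_to :: "(nat \<Rightarrow> 'a::{field,topological_space}) \<Rightarrow> (nat \<Rightarrow> 'a) \<Rightarrow> 'a \<Rightarrow> bool" where
  "cf_converges_to a b L \<longleftrightarrow> (cf_approx a b \<longlongrightarrow> L) sequentially"

end

theory Submission imports Defs begin

lemma div_aux: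
  fixes x y z v c :: real
  assumes "c \<noteq> 0"
  shows "(x + y / c) / (z + v / c) = (x * c + y) / (z * c + v)"
proof -
  have "x + y / c = (x*c+y)/c" "z + v/c = (z*c+v)/c" using assms by (auto simp: field_simps)
  then show ?thesis using assms by simp
qed

lemma cf_gen:
  fixes a b A B :: "nat \<Rightarrow> real" and D :: "real set"
  assumes A0: "A 0 = 0" "B 0 = 1" "A 1 = a 1" "B 1 = b 1"
  and recA: "\<And>k. A (k+2) = b (k+2) * A (k+1) + a (k+2) * A k"
  and recB: "\<And>k. B (k+2) = b (k+2) * B (k+1) + a (k+2) * B k"
  and D1: "\<And>m w. w \<in> D \<Longrightarrow> b m + w \<noteq> 0"
  and D2: "\<And>m w. w \<in> D \<Longrightarrow> a m / (b m + w) \<in> D"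
  shows "w \<in> D \<Longrightarrow> foldr (\<lambda>m acc. a m / (b m + acc)) [1..<Suc k+1] w
           = (A (Suc k) + A k * w) / (B (Suc k) + B k * w)"
proof (induction k arbitrary: w)
  case 0
  then show ?case using A0 by simp
next
  case (Suc k)
  define c where "c = b (k+2) + w"
  have c: "c \<noteq> 0" using D1 Suc.prems c_def by simp
  have "[1..<Suc (Suc k) + 1] = [1..<Suc k + 1] @ [Suc (Suc k)]" by simp
  then have "foldr (\<lambda>m acc. a m / (b m + acc)) [1..<Suc (Suc k)+1] w
     = foldr (\<lambda>m acc. a m / (b m + acc)) [1..<Suc k+1] (a (k+2) / c)"
    by (simp add: c_def)
  also have "\<dots> = (A (Suc k) + A k * (a (k+2) / c)) / (B (Suc k) + B k * (a (k+2) / c))"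
    using Suc.IH[of "a (k+2) / c"] D2 Suc.prems c_def by simp
  also have "\<dots> = (A (Suc k) * c + A k * a (k+2)) / (B (Suc k) * c + B k * a (k+2))"
    using div_aux[OF c] by (simp add: mult.commute)
  also have "\<dots> = (A (Suc (Suc k)) + A (Suc k) * w) / (B (Suc (Suc k)) + B (Suc k) * w)"
    using recA[of k] recB[of k] by (simp add: c_def algebra_simps)
  finally show ?case .
qed


definition BB :: "nat \<Rightarrow> nat \<Rightarrow> real" where
  "BB n k = (real k + 1) * fact (k+n) / fact n"
definition tt :: "nat \<Rightarrow> nat \<Rightarrow> real" where
  "tt n j = real n ^ (j+1) / (real j * BB n j)"
definition SS :: "nat \<Rightarrow> nat \<Rightarrow> real" where
  "SS n k = (\<Sum>j=1..k. tt n j)"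
definition AA :: "nat \<Rightarrow> nat \<Rightarrow> real" where
  "AA n k = - BB n k * SS n k"

lemma BB_pos: "BB n k > 0"
  unfolding BB_def by (simp add: add_pos_pos)

lemma BB0: "BB n 0 = 1" unfolding BB_def by simp
lemma BB1: "BB n 1 = 1 + 2 * real n + 1" unfolding BB_def by (simp add: field_simps)
lemma AA0: "AA n 0 = 0" unfolding AA_def SS_def by simp
lemma AA1: "AA n 1 = - real n * (1 + real n - 1)"
proof -
  have "BB n 1 \<noteq> 0" using BB_pos[of n 1] by simp
  then show ?thesis unfolding AA_def SS_def tt_def by (simp add: power2_eq_square)
qed

lemma BBG0: "BB n k = (real k + 1) * (fact (k+n) / fact n)"
  unfolding BB_def by simp
lemma BBG1: "BB n (Suc k) = (real k + 2) * (real k + real n + 1) * (fact (k+n) / fact n)"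
proof -
  have "Suc k + n = Suc (k+n)" by simp
  then show ?thesis unfolding BB_def by (simp add: field_simps)
qed
lemma BBG2: "BB n (Suc (Suc k)) = (real k + 3) * (real k + real n + 2) * (real k + real n + 1) * (fact (k+n) / fact n)"
proof -
  have "Suc (Suc k) + n = Suc (Suc (k+n))" by simp
  then show ?thesis unfolding BB_def by (simp add: field_simps)
qed

lemma recB: "BB n (k+2) = (real (k+2) + 2 * real n + 1) * BB n (k+1)
   + (- real n * (real (k+2) + real n - 1)) * BB n k"
proof -
  have e: "k + 2 = Suc (Suc k)" "k + 1 = Suc k" by simp_all
  have g: "\<And>G::real. (real k + 3) * (real k + real n + 2) * (real k + real n + 1) * G
     = (real (k+2) + 2 * real n + 1) * ((real k + 2) * (real k + real n + 1) * G)
     + (- real n * (real (k+2) + real n - 1)) * ((real k + 1) * G)"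
    by (simp add: algebra_simps)
  show ?thesis unfolding e BBG2[of n k] BBG1[of n k] BBG0[of n k] using g[of "fact (k+n)/fact n"] by simp
qed

lemma canc: "(B::real) \<noteq> 0 \<Longrightarrow> B * (x / (j * B)) = x / j"
  by (cases "j = 0") (simp_all add: field_simps)

lemma abs_aux:
  fixes a b c G x m :: real
  assumes "a \<noteq> 0" "b \<noteq> 0" "c \<noteq> 0" "G \<noteq> 0"
  shows "x * b * (a * G) * (m / (a * (c * b * G))) = x * m / c"
  using assms by (simp add: field_simps)

lemma key: "BB n (k+2) * tt n (k+2) = real n * (real k + real n + 1) * BB n k * tt n (k+1)"
proof -
  have nz: "real k + 1 \<noteq> 0" "real k + 2 \<noteq> 0" "real k + real n + 1 \<noteq> 0" "BB n (k+2) \<noteq> 0"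
      "fact (k+n) / fact n \<noteq> (0::real)"
    using BB_pos[of n "k+2"] by (simp_all add: add_pos_nonneg)
  have e3: "real n ^ (k+3) = real n * (real n * (real n * real n ^ k))"
  proof -
    have "k+3 = Suc (Suc (Suc k))" by simp
    then show ?thesis by (simp only: power_Suc)
  qed
  have e4: "k+2+1 = k+3" "real (k+2) = real k + 2" by simp_all
  have "BB n (k+2) * tt n (k+2) = real n ^ (k+3) / (real k + 2)"
    unfolding tt_def by (subst canc[OF nz(4)]) (simp only: e4)
  also have "\<dots> = real n * real n ^ (k+2) / (real k + 2)"
  proof -
    have "k+3 = Suc (k+2)" by simp
    then show ?thesis by (simp only: power_Suc)
  qed
  also have "\<dots> = real n * (real k + real n + 1) * ((real k + 1) * (fact (k+n) / fact n))
     * (real n ^ (k+2) / ((real k + 1) * ((real k + 2) * (real k + real n + 1) * (fact (k+n) / fact n))))"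
    by (rule abs_aux[OF nz(1) nz(3) nz(2) nz(5), symmetric])
  also have "\<dots> = real n * (real k + real n + 1) * BB n k * tt n (k+1)"
  proof -
    have b1: "BB n (k+1) = (real k + 2) * (real k + real n + 1) * (fact (k+n) / fact n)"
      using BBG1[of n k] by simp
    have e6: "k+1+1 = k+2" "real (k+1) = real k + 1" by simp_all
    show ?thesis unfolding tt_def BBG0[of n k] b1 e6 ..
  qed
  finally show ?thesis .
qed

lemma recA: "AA n (k+2) = (real (k+2) + 2 * real n + 1) * AA n (k+1)
   + (- real n * (real (k+2) + real n - 1)) * AA n k"
proof -
  have S1: "SS n (k+1) = SS n k + tt n (k+1)" unfolding SS_def by simp
  have S2: "SS n (k+2) = SS n (k+1) + tt n (k+2)" unfolding SS_def by simp
  have SK: "SS n k = SS n (k+1) - tt n (k+1)" using S1 by simp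
  have "AA n (k+2) = - (BB n (k+2) * SS n (k+1)) - BB n (k+2) * tt n (k+2)"
    unfolding AA_def S2 by (simp add: algebra_simps)
  also have "\<dots> = - (((real (k+2) + 2 * real n + 1) * BB n (k+1)
   + (- real n * (real (k+2) + real n - 1)) * BB n k) * SS n (k+1))
    - real n * (real k + real n + 1) * BB n k * tt n (k+1)"
    unfolding key unfolding recB[of n k] ..
  also have "\<dots> = (real (k+2) + 2 * real n + 1) * AA n (k+1)
   + (- real n * (real (k+2) + real n - 1)) * AA n k"
    unfolding AA_def SK by (simp add: algebra_simps)
  finally show ?thesis .
qed


lemma cf_eq: "cf_approx (\<lambda>m. - real n * (real m + real n - 1)) (\<lambda>m. real m + 2 * real n + 1) k = - SS n k"
proof (cases k)
  case 0
  then show ?thesis unfolding cf_approx_def SS_def by simp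
next
  case (Suc k')
  let ?a = "\<lambda>m. - real n * (real m + real n - 1)"
  let ?b = "\<lambda>m. real m + 2 * real n + 1"
  let ?D = "{w::real. w \<ge> - real n}"
  have D1: "?b m + w \<noteq> 0" if "w \<in> ?D" for m w using that by simp
  have D2: "?a m / (?b m + w) \<in> ?D" if "w \<in> ?D" for m w
  proof -
    have d: "?b m + w \<ge> real m + real n + 1" using that by simp
    then have dp: "?b m + w > 0" by linarith
    have "real n * (real m + real n - 1) \<le> real n * (?b m + w)"
      by (rule mult_left_mono) (use d in auto)
    then have "- real n * (?b m + w) \<le> ?a m" by simp
    then show ?thesis using dp by (simp add: pos_le_divide_eq divide_le_eq mult.commute)
  qed
  have A1: "AA n 1 = ?a 1" using AA1 by simp
  have B1: "BB n 1 = ?b 1" using BB1 by simp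
  have "foldr (\<lambda>m acc. ?a m / (?b m + acc)) [1..<Suc k'+1] 0
     = (AA n (Suc k') + AA n k' * 0) / (BB n (Suc k') + BB n k' * 0)"
    by (rule cf_gen[where A="AA n" and B = "BB n" and D = ?D, OF AA0 BB0 A1 B1 recA recB D1 D2]) auto
  also have "\<dots> = - SS n (Suc k')"
    using BB_pos[of n "Suc k'"] unfolding AA_def by simp
  finally show ?thesis unfolding cf_approx_def Suc .
qed


definition uu :: "nat \<Rightarrow> nat \<Rightarrow> real" where
  "uu n j = real n ^ (n+j) / fact (n+j)"

lemma uu_Suc: "uu n (Suc j) = uu n j * real n / (real n + real j + 1)"
proof -
  have "n + Suc j = Suc (n+j)" by simp
  then show ?thesis unfolding uu_def by (simp add: field_simps)
qed

lemma uu0: assumes "n = Suc p" shows "uu n 0 = real n ^ p / fact p"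
proof -
  have "uu n 0 = (real n * real n ^ p) / (real n * fact p)"
    unfolding uu_def using assms by (simp del: of_nat_Suc)
  also have "\<dots> = real n ^ p / fact p" using assms by (simp del: of_nat_Suc)
  finally show ?thesis .
qed

lemma ct_atom:
  fixes N M P j1 j2 G x :: real
  assumes "P \<noteq> 0" "j1 \<noteq> 0" "j2 \<noteq> 0" "G \<noteq> 0" "x \<noteq> 0"
  shows "N / P * (M / (j1 * (j2 * G / (x * P)))) = x * (N * M) / (j1 * j2 * G)"
  using assms by (simp add: field_simps)

lemma ct: assumes "n = Suc p"
  shows "real n ^ p / fact p * tt n (Suc j) = real n * uu n (Suc j) / ((real j + 1) * (real j + 2))"
proof -
  have f: "fact n = real n * fact p" using assms by simp
  have pw: "real n ^ p * real n ^ (Suc j + 1) = real n ^ (n + Suc j)"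
    using assms by (simp add: power_add[symmetric])
  have e: "real (Suc j) = real j + 1" "real (Suc j) + 1 = real j + 2" "Suc j + n = n + Suc j" by simp_all
  have nz: "(fact p::real) \<noteq> 0" "real j + 1 \<noteq> 0" "real j + 2 \<noteq> 0" "(fact (n + Suc j)::real) \<noteq> 0"
    "real n \<noteq> 0" using assms by (simp_all add: add_nonneg_pos)
  have "real n ^ p / fact p * tt n (Suc j)
     = real n ^ p / fact p * (real n ^ (Suc j + 1) / ((real j + 1) * ((real j + 2) * fact (n + Suc j) / (real n * fact p))))"
    unfolding tt_def BB_def e f by (simp only: add.assoc one_add_one)
  also have "\<dots> = real n * (real n ^ p * real n ^ (Suc j + 1)) / ((real j + 1) * (real j + 2) * fact (n + Suc j))"
    by (rule ct_atom[OF nz])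
  also have "\<dots> = real n * uu n (Suc j) / ((real j + 1) * (real j + 2))"
    unfolding pw uu_def by simp
  finally show ?thesis .
qed

lemma step_atom:
  fixes u x A B C :: real
  assumes "A \<noteq> 0" "B \<noteq> 0" "C \<noteq> 0" "A = x + B" "B = C + 1"
  shows "x*u/A + x*(x*u/A)/B + x*u/(C*B) = x*u/C"
proof -
  have "x*u/A + x*(x*u/A)/B + x*u/(C*B) - x*u/C = (x*u*C*B + x*x*u*C + x*u*A - x*u*A*B) / (A*B*C)"
    using assms(1-3) by (simp add: field_simps)
  also have "x*u*C*B + x*x*u*C + x*u*A - x*u*A*B = 0"
    unfolding assms(4) assms(5) by (simp add: algebra_simps)
  finally show ?thesis by simp
qed

lemma step_alg:
  fixes u K x :: real
  assumes "K \<ge> 0" "x \<ge> 0"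
  shows "x*u/(x+K+2) + x*(x*u/(x+K+2))/(K+2) + x*u/((K+1)*(K+2)) = x*u/(K+1)"
proof -
  have "x+K+2 \<noteq> 0" "K+2 \<noteq> 0" "K+1 \<noteq> 0" using assms by auto
  then show ?thesis using step_atom[of "x+K+2" "K+2" "K+1" x u] by (simp add: mult.commute)
qed

lemma ident:
  assumes "n = Suc p"
  shows "(\<Sum>k<n+K+2. real n ^ k / fact k) + real n * uu n (Suc K) / (real K + 1)
     + real n ^ p / fact p * SS n K = (\<Sum>k<n. real n ^ k / fact k) + real n ^ p / fact p * (1 + real n)"
proof (induction K)
  case 0
  have s: "(\<Sum>k<n+0+2. real n ^ k / fact k) = (\<Sum>k<n. real n ^ k / fact k) + uu n 0 + uu n 1"
    unfolding uu_def by simp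
  have "real n + 1 \<noteq> 0" by (simp add: add_nonneg_pos)
  then have h: "uu n 1 * (real n + 1) = uu n 0 * real n" using uu_Suc[of n 0] by simp
  have "uu n 1 + real n * uu n 1 = uu n 0 * real n" using h by (simp add: algebra_simps)
  then show ?case unfolding s SS_def uu0[OF assms, symmetric] by (simp add: algebra_simps)
next
  case (Suc K)
  have s: "(\<Sum>k<n+Suc K+2. real n ^ k / fact k) = (\<Sum>k<n+K+2. real n ^ k / fact k) + uu n (Suc (Suc K))"
    unfolding uu_def by simp
  have S: "SS n (Suc K) = SS n K + tt n (Suc K)" unfolding SS_def by simp
  have u2: "uu n (Suc (Suc K)) = real n * uu n (Suc K) / (real n + real K + 2)"
    using uu_Suc[of n "Suc K"] by (simp add: algebra_simps)
  have "real n * uu n (Suc K) / (real n + real K + 2) + real n * (real n * uu n (Suc K) / (real n + real K + 2)) / (real K + 2)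
     + real n * uu n (Suc K) / ((real K + 1) * (real K + 2)) = real n * uu n (Suc K) / (real K + 1)"
    by (rule step_alg) auto
  then show ?case using Suc.IH ct[OF assms, of K] unfolding s S u2
    by (simp add: algebra_simps)
qed


theorem theorem2p1:
  fixes n :: nat
  assumes "n \<ge> 1"
  shows "\<exists>L::real.
    cf_converges_to (\<lambda>m. - real n * (real m + real n - 1)) (\<lambda>m. real m + 2 * real n + 1) L \<and>
    exp (real n) = (\<Sum>k<n. real n ^ k / fact k)
                   + real n ^ (n - 1) / fact (n - 1) * (1 + real n + L)"
proof -
  obtain p where np: "n = Suc p" using assms by (cases n) auto
  define c where "c = real n ^ p / fact p"
  define R where "R = (\<Sum>k<n. real n ^ k / fact k) + c * (1 + real n)"
  have cpos: "c > 0" unfolding c_def using np by simp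
  have ser: "(\<lambda>N. \<Sum>k<N. real n ^ k / fact k) \<longlonglongrightarrow> exp (real n)"
  proof -
    have "(\<lambda>k. real n ^ k /\<^sub>R fact k) sums exp (real n)" by (rule exp_converges)
    then show ?thesis by (simp add: sums_def divide_inverse_commute)
  qed
  have E: "(\<lambda>K. \<Sum>k<n+K+2. real n ^ k / fact k) \<longlonglongrightarrow> exp (real n)"
  proof -
    have "(\<lambda>K. \<Sum>k<K + (n+2). real n ^ k / fact k) \<longlonglongrightarrow> exp (real n)"
      by (rule LIMSEQ_ignore_initial_segment[OF ser])
    moreover have "(\<lambda>K. \<Sum>k<K + (n+2). real n ^ k / fact k) = (\<lambda>K. \<Sum>k<n+K+2. real n ^ k / fact k)"
      by (rule ext) (simp add: ac_simps)
    ultimately show ?thesis by simp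
  qed
  have W: "(\<lambda>K. real n * uu n (Suc K) / (real K + 1)) \<longlonglongrightarrow> 0"
  proof -
    have sm: "summable (\<lambda>k. real n ^ k / fact k)"
      using ser summable_def sums_def by blast
    have "(\<lambda>k. real n ^ k / fact k) \<longlonglongrightarrow> 0" by (rule summable_LIMSEQ_zero[OF sm])
    then have "(\<lambda>K. real n ^ (K + (n+1)) / fact (K + (n+1))) \<longlonglongrightarrow> 0"
      by (rule LIMSEQ_ignore_initial_segment)
    moreover have "(\<lambda>K. real n ^ (K + (n+1)) / fact (K + (n+1))) = (\<lambda>K. uu n (Suc K))"
      by (rule ext) (simp add: uu_def ac_simps)
    ultimately have u: "(\<lambda>K. uu n (Suc K)) \<longlonglongrightarrow> 0" by simp
    have "(\<lambda>K. (real n * uu n (Suc K)) * inverse (real (Suc K))) \<longlonglongrightarrow> (real n * 0) * 0"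
      by (intro tendsto_mult tendsto_const u LIMSEQ_inverse_real_of_nat)
    then show ?thesis by (simp add: divide_inverse add.commute)
  qed
  have cS: "(\<lambda>K. c * SS n K) \<longlonglongrightarrow> R - exp (real n) - 0"
  proof -
    have "(\<lambda>K. R - (\<Sum>k<n+K+2. real n ^ k / fact k) - real n * uu n (Suc K) / (real K + 1))
          \<longlonglongrightarrow> R - exp (real n) - 0"
      by (intro tendsto_diff tendsto_const E W)
    moreover have "(\<lambda>K. R - (\<Sum>k<n+K+2. real n ^ k / fact k) - real n * uu n (Suc K) / (real K + 1))
       = (\<lambda>K. c * SS n K)"
      by (rule ext) (use ident[OF np] in \<open>simp add: R_def c_def algebra_simps\<close>)
    ultimately show ?thesis by simp
  qed
  define L where "L = - ((R - exp (real n)) / c)"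
  have "(\<lambda>K. - ((c * SS n K) / c)) \<longlonglongrightarrow> - ((R - exp (real n) - 0) / c)"
    by (intro tendsto_minus tendsto_divide cS tendsto_const) (use cpos in simp)
  then have conv: "(\<lambda>K. - SS n K) \<longlonglongrightarrow> L" using cpos unfolding L_def by simp
  show ?thesis
  proof (intro exI conjI)
    show "cf_converges_to (\<lambda>m. - real n * (real m + real n - 1)) (\<lambda>m. real m + 2 * real n + 1) L"
      unfolding cf_converges_to_def cf_eq using conv .
    have cL: "c * L = exp (real n) - R" unfolding L_def using cpos by simp
    have cc: "real n ^ (n - 1) / fact (n - 1) = c" using np unfolding c_def by simp
    show "exp (real n) = (\<Sum>k<n. real n ^ k / fact k)
                   + real n ^ (n - 1) / fact (n - 1) * (1 + real n + L)"
      unfolding cc using cL unfolding R_def by (simp add: algebra_simps)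
  qed
qed

end
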